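(* Let $L\in\{0,1\}$, $X$ and $A$ be jointly distributed discrete random variables with finite supports, such that conditioned on $L=0$ the message $A$ is independent of $X$, i.e. $\Pr(A=a\mid X=x,L=0)=\Pr(A=a\mid L=0)$ for all $a$ and all $x$ with $\Pr(X=x,L=0)>0$. Assume $\Pr(L=0\mid X=x)>0$ for all $x$ in the support of $X$. Then \[ I(X;A)\le \mathrm{susp}(X,A)-\mathrm{susp}(X) \] (where the right-hand side may be $+\infty$). If moreover $\Pr(L=0\mid X=x,A=a)>0$ whenever $\Pr(X=x,A=a)>0$, then equality holds if and only if $A$ has the same distribution as $A$ conditioned on $L=0$, i.e. $\Pr(A=a)=\Pr(A=a\mid L=0)$ for all $a$.
   Context: All logarithms are base $2$. For a random variable $Y$ (possibly a tuple of random variables) jointly distributed with $L\in\{0,1\}$ and a value $y$ with $\Pr(Y=y)>0$, the suspicion given $Y=y$ is $\mathrm{susp}(Y=y)=-\log\Pr(L=0\mid Y=y)\in[0,\infty]$, and the suspicion given $Y$ is $\mathrm{susp}(Y)=\sum_{y}\Pr(Y=y)\,\mathrm{susp}(Y=y)$. Thus $\mathrm{susp}(X,A)$ is the suspicion given the pair $(X,A)$. $I(\cdot;\cdot)$ is Shannon mutual information. (Interpretation: $L=1$ means "Alice knows the secret $X$"; when $L=0$ she picks her message $A$ without regard to $X$.) *)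

theory Defs
  imports "HOL-Probability.Probability"
begin

text \<open>A joint distribution of (L, X, A) is a pmf on outcomes (l, x, a) :: bool \<times> 'x \<times> 'a,
  with l = True meaning L = 1 and l = False meaning L = 0.\<close>

definition Lv :: "bool \<times> 'x \<times> 'a \<Rightarrow> bool" where "Lv \<omega> = fst \<omega>"
definition Xv :: "bool \<times> 'x \<times> 'a \<Rightarrow> 'x" where "Xv \<omega> = fst (snd \<omega>)"
definition Av :: "bool \<times> 'x \<times> 'a \<Rightarrow> 'a" where "Av \<omega> = snd (snd \<omega>)"

definition Pr :: "'w pmf \<Rightarrow> ('w \<Rightarrow> bool) \<Rightarrow> real" where
  "Pr P E = measure_pmf.prob P {\<omega>. E \<omega>}"

definition cPr :: "'w pmf \<Rightarrow> ('w \<Rightarrow> bool) \<Rightarrow> ('w \<Rightarrow> bool) \<Rightarrow> real" where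
  "cPr P E F = Pr P (\<lambda>\<omega>. E \<omega> \<and> F \<omega>) / Pr P F"

definition susp_at :: "(bool \<times> 'x \<times> 'a) pmf \<Rightarrow> (bool \<times> 'x \<times> 'a \<Rightarrow> 'y) \<Rightarrow> 'y \<Rightarrow> ereal" where
  "susp_at P Y y =
     (let q = cPr P (\<lambda>\<omega>. \<not> Lv \<omega>) (\<lambda>\<omega>. Y \<omega> = y)
      in if q = 0 then \<infinity> else ereal (- log 2 q))"

definition susp :: "(bool \<times> 'x \<times> 'a) pmf \<Rightarrow> (bool \<times> 'x \<times> 'a \<Rightarrow> 'y) \<Rightarrow> ereal" where
  "susp P Y = (\<Sum>y \<in> Y ` set_pmf P. ereal (Pr P (\<lambda>\<omega>. Y \<omega> = y)) * susp_at P Y y)"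

definition mutual_info :: "'w pmf \<Rightarrow> ('w \<Rightarrow> 'u) \<Rightarrow> ('w \<Rightarrow> 'v) \<Rightarrow> real" where
  "mutual_info P U V =
     (\<Sum>(u, v) \<in> (\<lambda>\<omega>. (U \<omega>, V \<omega>)) ` set_pmf P.
        Pr P (\<lambda>\<omega>. U \<omega> = u \<and> V \<omega> = v) *
        log 2 (Pr P (\<lambda>\<omega>. U \<omega> = u \<and> V \<omega> = v) /
               (Pr P (\<lambda>\<omega>. U \<omega> = u) * Pr P (\<lambda>\<omega>. V \<omega> = v))))"

end

theory Submission
  imports Defs
begin

lemma Pr_cong:
  assumes "\<And>w. E w \<longleftrightarrow> F w"
  shows "Pr P E = Pr P F"
proof -
  have "E = F" using assms by blast
  thus ?thesis by simp
qed

lemma Pr_nonneg: "0 \<le> Pr P E"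
  by (simp add: Pr_def)

lemma Pr_sum:
  assumes "finite (set_pmf P)"
  shows "Pr P E = (\<Sum>\<omega>\<in>set_pmf P. if E \<omega> then pmf P \<omega> else 0)"
proof -
  have "Pr P E = measure_pmf.prob P ({\<omega>. E \<omega>} \<inter> set_pmf P)"
    by (simp add: Pr_def measure_Int_set_pmf)
  also have "\<dots> = sum (pmf P) ({\<omega>. E \<omega>} \<inter> set_pmf P)"
    using assms by (simp add: measure_measure_pmf_finite)
  also have "{\<omega>. E \<omega>} \<inter> set_pmf P = {\<omega>\<in>set_pmf P. E \<omega>}" by blast
  also have "sum (pmf P) {\<omega>\<in>set_pmf P. E \<omega>} = (\<Sum>\<omega>\<in>set_pmf P. if E \<omega> then pmf P \<omega> else 0)"
    using assms by (rule sum.inter_filter)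
  finally show ?thesis .
qed

lemma Pr_ge_pmf:
  assumes "finite (set_pmf P)" "\<omega> \<in> set_pmf P" "E \<omega>"
  shows "pmf P \<omega> \<le> Pr P E"
proof -
  have "pmf P \<omega> = (if E \<omega> then pmf P \<omega> else 0)" using assms by simp
  also have "\<dots> \<le> (\<Sum>\<omega>\<in>set_pmf P. if E \<omega> then pmf P \<omega> else 0)"
    by (rule member_le_sum) (use assms in auto)
  finally show ?thesis using Pr_sum[OF assms(1)] by simp
qed

lemma Pr_mono:
  assumes "\<And>w. E w \<Longrightarrow> F w"
  shows "Pr P E \<le> Pr P F"
  unfolding Pr_def
  by (rule measure_pmf.finite_measure_mono) (use assms in auto)

lemma Pr_zero:
  assumes "finite (set_pmf P)" "\<And>w. w \<in> set_pmf P \<Longrightarrow> \<not> E w"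
  shows "Pr P E = 0"
  using assms by (simp add: Pr_sum)

lemma group_sum:
  assumes fin: "finite (set_pmf P)"
  shows "(\<Sum>y\<in>Y ` set_pmf P. Pr P (\<lambda>\<omega>. Y \<omega> = y \<and> E \<omega>) * f y) =
         (\<Sum>\<omega>\<in>set_pmf P. if E \<omega> then pmf P \<omega> * f (Y \<omega>) else 0)"
proof -
  let ?S = "set_pmf P"
  have "(\<Sum>\<omega>\<in>?S. if E \<omega> then pmf P \<omega> * f (Y \<omega>) else 0)
     = (\<Sum>y\<in>Y ` ?S. \<Sum>\<omega>\<in>{\<omega>. \<omega> \<in> ?S \<and> Y \<omega> = y}. if E \<omega> then pmf P \<omega> * f (Y \<omega>) else 0)"
    using fin by (rule sum.image_gen)
  also have "\<dots> = (\<Sum>y\<in>Y ` ?S. Pr P (\<lambda>\<omega>. Y \<omega> = y \<and> E \<omega>) * f y)"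
  proof (rule sum.cong[OF refl])
    fix y assume "y \<in> Y ` ?S"
    have "(\<Sum>\<omega>\<in>{\<omega>. \<omega> \<in> ?S \<and> Y \<omega> = y}. if E \<omega> then pmf P \<omega> * f (Y \<omega>) else 0)
        = (\<Sum>\<omega>\<in>{\<omega>. \<omega> \<in> ?S \<and> Y \<omega> = y}. (if E \<omega> then pmf P \<omega> else 0) * f y)"
      by (rule sum.cong) auto
    also have "\<dots> = (\<Sum>\<omega>\<in>{\<omega>. \<omega> \<in> ?S \<and> Y \<omega> = y}. (if E \<omega> then pmf P \<omega> else 0)) * f y"
      by (simp add: sum_distrib_right)
    also have "(\<Sum>\<omega>\<in>{\<omega>. \<omega> \<in> ?S \<and> Y \<omega> = y}. (if E \<omega> then pmf P \<omega> else 0))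
       = (\<Sum>\<omega>\<in>?S. if Y \<omega> = y \<and> E \<omega> then pmf P \<omega> else 0)"
    proof -
      have "(\<Sum>\<omega>\<in>{\<omega>. \<omega> \<in> ?S \<and> Y \<omega> = y}. (if E \<omega> then pmf P \<omega> else 0))
          = (\<Sum>\<omega>\<in>?S. if Y \<omega> = y then (if E \<omega> then pmf P \<omega> else 0) else 0)"
        using sum.inter_filter[OF fin, of "\<lambda>\<omega>. if E \<omega> then pmf P \<omega> else 0" "\<lambda>\<omega>. Y \<omega> = y"]
        by simp
      also have "\<dots> = (\<Sum>\<omega>\<in>?S. if Y \<omega> = y \<and> E \<omega> then pmf P \<omega> else 0)"
        by (rule sum.cong) auto
      finally show ?thesis .
    qed
    also have "\<dots> = Pr P (\<lambda>\<omega>. Y \<omega> = y \<and> E \<omega>)"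
      using Pr_sum[OF fin] by simp
    finally show "(\<Sum>\<omega>\<in>{\<omega>. \<omega> \<in> ?S \<and> Y \<omega> = y}. if E \<omega> then pmf P \<omega> * f (Y \<omega>) else 0)
        = Pr P (\<lambda>\<omega>. Y \<omega> = y \<and> E \<omega>) * f y" .
  qed
  finally show ?thesis by simp
qed

lemma group_sum1:
  assumes fin: "finite (set_pmf P)"
  shows "(\<Sum>y\<in>Y ` set_pmf P. Pr P (\<lambda>\<omega>. Y \<omega> = y) * f y) =
         (\<Sum>\<omega>\<in>set_pmf P. pmf P \<omega> * f (Y \<omega>))"
  using group_sum[OF fin, of Y "\<lambda>_. True" f] by simp

lemma log_ident:
  fixes B J X Px Pa :: real
  assumes "0 < B" "0 < J" "0 < X" "0 < Px" "0 < Pa"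
  shows "- log 2 (B * J / X) + log 2 (J / Px) - log 2 (X / (Px * Pa)) = log 2 (Pa / B)"
  using assms by (simp add: log_divide log_mult)

lemma gibbs_pt:
  fixes p pa b :: real
  assumes "0 < p" "0 < pa" "0 < b"
  shows "0 \<le> p * log 2 (pa / b) - p * (1 - b / pa) / ln 2"
    and "p * log 2 (pa / b) - p * (1 - b / pa) / ln 2 = 0 \<Longrightarrow> b = pa"
proof -
  define t where "t = b / pa"
  have t: "0 < t" using assms by (simp add: t_def)
  have l: "log 2 (pa / b) = - ln t / ln 2"
    using assms by (simp add: t_def log_def ln_div)
  have ln2: "0 < ln (2::real)" by simp
  have "ln t \<le> t - 1" using t by (rule ln_le_minus_one)
  hence "(1 - t) / ln 2 \<le> - ln t / ln 2" by (intro divide_right_mono) (use ln2 in auto)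
  hence A: "p * ((1 - t) / ln 2) \<le> p * (- ln t / ln 2)" by (rule mult_left_mono) (use assms(1) in simp)
  have B: "p * log 2 (pa / b) = p * (- ln t / ln 2)" by (simp add: l)
  have C: "p * (1 - b / pa) / ln 2 = p * ((1 - t) / ln 2)" by (simp add: t_def)
  show "0 \<le> p * log 2 (pa / b) - p * (1 - b / pa) / ln 2" using A B C by linarith
  assume "p * log 2 (pa / b) - p * (1 - b / pa) / ln 2 = 0"
  hence E: "p * (- ln t / ln 2) = p * ((1 - t) / ln 2)" using B C by linarith
  have "- ln t / ln 2 = (1 - t) / ln 2" using E assms(1) mult_left_cancel by (metis less_irrefl)
  hence "(- ln t / ln 2) * ln 2 = ((1 - t) / ln 2) * ln 2" by (rule arg_cong)
  hence "- ln t = 1 - t" using ln2 by simp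
  hence "ln t = t - 1" by linarith
  hence "t = 1" using t ln_eq_minus_one by blast
  thus "b = pa" using assms by (simp add: t_def)
qed

theorem theorem3p1:
  fixes P :: "(bool \<times> 'x \<times> 'a) pmf"
  assumes fin: "finite (set_pmf P)"
    and indep: "\<And>a x. Pr P (\<lambda>\<omega>. Xv \<omega> = x \<and> \<not> Lv \<omega>) > 0 \<Longrightarrow>
        cPr P (\<lambda>\<omega>. Av \<omega> = a) (\<lambda>\<omega>. Xv \<omega> = x \<and> \<not> Lv \<omega>) = cPr P (\<lambda>\<omega>. Av \<omega> = a) (\<lambda>\<omega>. \<not> Lv \<omega>)"
    and posX: "\<And>x. x \<in> Xv ` set_pmf P \<Longrightarrow> cPr P (\<lambda>\<omega>. \<not> Lv \<omega>) (\<lambda>\<omega>. Xv \<omega> = x) > 0"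
  shows "ereal (mutual_info P Xv Av) \<le> susp P (\<lambda>\<omega>. (Xv \<omega>, Av \<omega>)) - susp P Xv \<and>
         ((\<forall>x a. Pr P (\<lambda>\<omega>. Xv \<omega> = x \<and> Av \<omega> = a) > 0 \<longrightarrow>
             cPr P (\<lambda>\<omega>. \<not> Lv \<omega>) (\<lambda>\<omega>. Xv \<omega> = x \<and> Av \<omega> = a) > 0) \<longrightarrow>
         (ereal (mutual_info P Xv Av) = susp P (\<lambda>\<omega>. (Xv \<omega>, Av \<omega>)) - susp P Xv
          \<longleftrightarrow> (\<forall>a. Pr P (\<lambda>\<omega>. Av \<omega> = a) = cPr P (\<lambda>\<omega>. Av \<omega> = a) (\<lambda>\<omega>. \<not> Lv \<omega>))))"
proof -
  let ?S = "set_pmf P"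
  define px :: "bool \<times> 'x \<times> 'a \<Rightarrow> real" where "px \<omega> = Pr P (\<lambda>w. Xv w = Xv \<omega>)" for \<omega>
  define pa :: "bool \<times> 'x \<times> 'a \<Rightarrow> real" where "pa \<omega> = Pr P (\<lambda>w. Av w = Av \<omega>)" for \<omega>
  define pxa :: "bool \<times> 'x \<times> 'a \<Rightarrow> real" where "pxa \<omega> = Pr P (\<lambda>w. Xv w = Xv \<omega> \<and> Av w = Av \<omega>)" for \<omega>
  define jX :: "bool \<times> 'x \<times> 'a \<Rightarrow> real" where "jX \<omega> = Pr P (\<lambda>w. Xv w = Xv \<omega> \<and> \<not> Lv w)" for \<omega>
  define q0 where "q0 = Pr P (\<lambda>w. \<not> Lv w)"
  define q :: "bool \<times> 'x \<times> 'a \<Rightarrow> real" where "q \<omega> = cPr P (\<lambda>w. \<not> Lv w) (\<lambda>w. Xv w = Xv \<omega> \<and> Av w = Av \<omega>)" for \<omega>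
  define r :: "bool \<times> 'x \<times> 'a \<Rightarrow> real" where "r \<omega> = cPr P (\<lambda>w. \<not> Lv w) (\<lambda>w. Xv w = Xv \<omega>)" for \<omega>
  define b :: "bool \<times> 'x \<times> 'a \<Rightarrow> real" where "b \<omega> = cPr P (\<lambda>w. Av w = Av \<omega>) (\<lambda>w. \<not> Lv w)" for \<omega>

  have pos: "0 < pmf P \<omega>" if "\<omega> \<in> ?S" for \<omega>
    using that pmf_nonneg[of P \<omega>] by (simp add: set_pmf_iff order_less_le)
  have pxa_pos: "0 < pxa \<omega>" if "\<omega> \<in> ?S" for \<omega>
    using pos[OF that] Pr_ge_pmf[OF fin that, of "\<lambda>w. Xv w = Xv \<omega> \<and> Av w = Av \<omega>"]
    unfolding pxa_def by simp
  have px_pos: "0 < px \<omega>" if "\<omega> \<in> ?S" for \<omega>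
    using pos[OF that] Pr_ge_pmf[OF fin that, of "\<lambda>w. Xv w = Xv \<omega>"]
    unfolding px_def by simp
  have pa_pos: "0 < pa \<omega>" if "\<omega> \<in> ?S" for \<omega>
    using pos[OF that] Pr_ge_pmf[OF fin that, of "\<lambda>w. Av w = Av \<omega>"]
    unfolding pa_def by simp
  have r_pos: "0 < r \<omega>" if "\<omega> \<in> ?S" for \<omega>
    using posX[OF imageI[OF that]] unfolding r_def .
  have r_eq: "r \<omega> = jX \<omega> / px \<omega>" for \<omega>
  proof -
    have "Pr P (\<lambda>w. \<not> Lv w \<and> Xv w = Xv \<omega>) = jX \<omega>"
      unfolding jX_def by (rule Pr_cong) auto
    thus ?thesis unfolding r_def cPr_def px_def by simp
  qed
  have jX_pos: "0 < jX \<omega>" if "\<omega> \<in> ?S" for \<omega>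
    using r_pos[OF that] px_pos[OF that] r_eq[of \<omega>] by (simp add: zero_less_divide_iff)
  have indep_eq: "Pr P (\<lambda>w. Av w = Av \<omega> \<and> Xv w = Xv \<omega> \<and> \<not> Lv w) = b \<omega> * jX \<omega>"
    if "\<omega> \<in> ?S" for \<omega>
  proof -
    have "cPr P (\<lambda>w. Av w = Av \<omega>) (\<lambda>w. Xv w = Xv \<omega> \<and> \<not> Lv w) = b \<omega>"
      using indep[of "Xv \<omega>" "Av \<omega>"] jX_pos[OF that] unfolding jX_def b_def by simp
    thus ?thesis using jX_pos[OF that] unfolding cPr_def jX_def by (simp add: field_simps)
  qed
  have q_eq: "q \<omega> = b \<omega> * jX \<omega> / pxa \<omega>" if "\<omega> \<in> ?S" for \<omega>
  proof -
    have "Pr P (\<lambda>w. \<not> Lv w \<and> Xv w = Xv \<omega> \<and> Av w = Av \<omega>)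
        = Pr P (\<lambda>w. Av w = Av \<omega> \<and> Xv w = Xv \<omega> \<and> \<not> Lv w)"
      by (rule Pr_cong) auto
    thus ?thesis using indep_eq[OF that] unfolding q_def cPr_def pxa_def by simp
  qed
  have b_nonneg: "0 \<le> b \<omega>" for \<omega>
    unfolding b_def cPr_def by (simp add: Pr_nonneg)
  obtain \<omega>1 where \<omega>1: "\<omega>1 \<in> ?S" using set_pmf_not_empty[of P] by auto
  have q0_pos: "0 < q0"
  proof -
    have "jX \<omega>1 \<le> q0" unfolding jX_def q0_def by (rule Pr_mono) auto
    thus ?thesis using jX_pos[OF \<omega>1] by simp
  qed

  have sumA: "(\<Sum>a\<in>Av ` ?S. Pr P (\<lambda>w. Av w = a \<and> \<not> Lv w)) = q0"
  proof -
    have "(\<Sum>a\<in>Av ` ?S. Pr P (\<lambda>w. Av w = a \<and> \<not> Lv w)) = (\<Sum>a\<in>Av ` ?S. Pr P (\<lambda>w. Av w = a \<and> \<not> Lv w) * 1)"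
      by simp
    also have "\<dots> = (\<Sum>\<omega>\<in>?S. if \<not> Lv \<omega> then pmf P \<omega> * 1 else 0)"
      by (rule group_sum[OF fin])
    also have "\<dots> = (\<Sum>\<omega>\<in>?S. if \<not> Lv \<omega> then pmf P \<omega> else 0)"
      by (intro sum.cong) auto
    also have "\<dots> = q0" unfolding q0_def by (rule Pr_sum[OF fin, symmetric])
    finally show ?thesis .
  qed
  have sum_b: "(\<Sum>\<omega>\<in>?S. pmf P \<omega> * (b \<omega> / pa \<omega>)) = 1"
  proof -
    have "(\<Sum>\<omega>\<in>?S. pmf P \<omega> * (b \<omega> / pa \<omega>)) =
      (\<Sum>a\<in>Av ` ?S. Pr P (\<lambda>w. Av w = a) * (cPr P (\<lambda>w. Av w = a) (\<lambda>w. \<not> Lv w) / Pr P (\<lambda>w. Av w = a)))"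
      using group_sum1[OF fin, of Av "\<lambda>a. cPr P (\<lambda>w. Av w = a) (\<lambda>w. \<not> Lv w) / Pr P (\<lambda>w. Av w = a)"]
      unfolding b_def pa_def by simp
    also have "\<dots> = (\<Sum>a\<in>Av ` ?S. Pr P (\<lambda>w. Av w = a \<and> \<not> Lv w) / q0)"
    proof (rule sum.cong[OF refl])
      fix a assume "a \<in> Av ` ?S"
      then obtain \<omega> where "\<omega> \<in> ?S" "a = Av \<omega>" by auto
      thus "Pr P (\<lambda>w. Av w = a) * (cPr P (\<lambda>w. Av w = a) (\<lambda>w. \<not> Lv w) / Pr P (\<lambda>w. Av w = a))
          = Pr P (\<lambda>w. Av w = a \<and> \<not> Lv w) / q0"
        using pa_pos[of \<omega>] unfolding pa_def cPr_def q0_def by simp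
    qed
    also have "\<dots> = (\<Sum>a\<in>Av ` ?S. Pr P (\<lambda>w. Av w = a \<and> \<not> Lv w)) / q0"
      by (simp add: sum_divide_distrib)
    also have "\<dots> = 1" using sumA q0_pos by simp
    finally show ?thesis .
  qed

  have s2: "susp P Xv = ereal (\<Sum>\<omega>\<in>?S. pmf P \<omega> * (- log 2 (r \<omega>)))"
  proof -
    have "susp P Xv = (\<Sum>x\<in>Xv ` ?S. ereal (Pr P (\<lambda>w. Xv w = x) *
            (- log 2 (cPr P (\<lambda>w. \<not> Lv w) (\<lambda>w. Xv w = x)))))"
      unfolding susp_def
    proof (rule sum.cong[OF refl])
      fix x assume "x \<in> Xv ` ?S"
      then obtain \<omega> where \<omega>: "\<omega> \<in> ?S" "x = Xv \<omega>" by auto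
      have "cPr P (\<lambda>w. \<not> Lv w) (\<lambda>w. Xv w = x) \<noteq> 0" using r_pos[OF \<omega>(1)] \<omega>(2) unfolding r_def by auto
      thus "ereal (Pr P (\<lambda>w. Xv w = x)) * susp_at P Xv x = ereal (Pr P (\<lambda>w. Xv w = x) *
            (- log 2 (cPr P (\<lambda>w. \<not> Lv w) (\<lambda>w. Xv w = x))))"
        by (simp add: susp_at_def Let_def)
    qed
    also have "\<dots> = ereal (\<Sum>x\<in>Xv ` ?S. Pr P (\<lambda>w. Xv w = x) *
            (- log 2 (cPr P (\<lambda>w. \<not> Lv w) (\<lambda>w. Xv w = x))))"
      by (rule sum_ereal)
    also have "\<dots> = ereal (\<Sum>\<omega>\<in>?S. pmf P \<omega> * (- log 2 (r \<omega>)))"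
      using group_sum1[OF fin, of Xv "\<lambda>x. - log 2 (cPr P (\<lambda>w. \<not> Lv w) (\<lambda>w. Xv w = x))"]
      unfolding r_def by simp
    finally show ?thesis .
  qed

  have MI: "mutual_info P Xv Av = (\<Sum>\<omega>\<in>?S. pmf P \<omega> * log 2 (pxa \<omega> / (px \<omega> * pa \<omega>)))"
  proof -
    have "mutual_info P Xv Av = (\<Sum>y\<in>(\<lambda>\<omega>. (Xv \<omega>, Av \<omega>)) ` ?S. Pr P (\<lambda>\<omega>. (Xv \<omega>, Av \<omega>) = y) *
       log 2 (Pr P (\<lambda>w. Xv w = fst y \<and> Av w = snd y) / (Pr P (\<lambda>w. Xv w = fst y) * Pr P (\<lambda>w. Av w = snd y))))"
      unfolding mutual_info_def by (rule sum.cong[OF refl]) auto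
    also have "\<dots> = (\<Sum>\<omega>\<in>?S. pmf P \<omega> * log 2 (pxa \<omega> / (px \<omega> * pa \<omega>)))"
      using group_sum1[OF fin, of "\<lambda>\<omega>. (Xv \<omega>, Av \<omega>)" "\<lambda>y. log 2 (Pr P (\<lambda>w. Xv w = fst y \<and> Av w = snd y) / (Pr P (\<lambda>w. Xv w = fst y) * Pr P (\<lambda>w. Av w = snd y)))"]
      unfolding pxa_def px_def pa_def by simp
    finally show ?thesis .
  qed

  have allA: "(\<forall>\<omega>\<in>?S. pa \<omega> = b \<omega>) \<longleftrightarrow> (\<forall>a. Pr P (\<lambda>\<omega>. Av \<omega> = a) = cPr P (\<lambda>\<omega>. Av \<omega> = a) (\<lambda>\<omega>. \<not> Lv \<omega>))"
  proof
    assume H: "\<forall>\<omega>\<in>?S. pa \<omega> = b \<omega>"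
    show "\<forall>a. Pr P (\<lambda>\<omega>. Av \<omega> = a) = cPr P (\<lambda>\<omega>. Av \<omega> = a) (\<lambda>\<omega>. \<not> Lv \<omega>)"
    proof
      fix a
      show "Pr P (\<lambda>\<omega>. Av \<omega> = a) = cPr P (\<lambda>\<omega>. Av \<omega> = a) (\<lambda>\<omega>. \<not> Lv \<omega>)"
      proof (cases "\<exists>\<omega>\<in>?S. Av \<omega> = a")
        case True
        then obtain \<omega> where "\<omega> \<in> ?S" "Av \<omega> = a" by blast
        thus ?thesis using H unfolding pa_def b_def by auto
      next
        case False
        have "Pr P (\<lambda>\<omega>. Av \<omega> = a) = 0" by (rule Pr_zero[OF fin]) (use False in auto)
        moreover have "Pr P (\<lambda>\<omega>. Av \<omega> = a \<and> \<not> Lv \<omega>) = 0" by (rule Pr_zero[OF fin]) (use False in auto)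
        ultimately show ?thesis unfolding cPr_def by simp
      qed
    qed
  next
    assume "\<forall>a. Pr P (\<lambda>\<omega>. Av \<omega> = a) = cPr P (\<lambda>\<omega>. Av \<omega> = a) (\<lambda>\<omega>. \<not> Lv \<omega>)"
    thus "\<forall>\<omega>\<in>?S. pa \<omega> = b \<omega>" unfolding pa_def b_def by auto
  qed

  show ?thesis
  proof (cases "\<exists>\<omega>\<in>?S. q \<omega> = 0")
    case True
    then obtain \<omega>0 where \<omega>0: "\<omega>0 \<in> ?S" "q \<omega>0 = 0" by blast
    have c0: "cPr P (\<lambda>w. \<not> Lv w) (\<lambda>w. (Xv w, Av w) = (Xv \<omega>0, Av \<omega>0)) = 0"
      using \<omega>0(2) unfolding q_def by simp
    have p0: "0 < Pr P (\<lambda>w. (Xv w, Av w) = (Xv \<omega>0, Av \<omega>0))"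
      using pxa_pos[OF \<omega>0(1)] unfolding pxa_def by simp
    have t0: "ereal (Pr P (\<lambda>w. (Xv w, Av w) = (Xv \<omega>0, Av \<omega>0))) *
        susp_at P (\<lambda>\<omega>. (Xv \<omega>, Av \<omega>)) (Xv \<omega>0, Av \<omega>0) = \<infinity>"
      using c0 p0 unfolding susp_at_def Let_def by simp
    have inf: "susp P (\<lambda>\<omega>. (Xv \<omega>, Av \<omega>)) = \<infinity>"
      unfolding susp_def sum_Pinfty
      using fin t0 \<omega>0(1) by (intro conjI finite_imageI bexI[of _ "(Xv \<omega>0, Av \<omega>0)"]) auto
    have notprem: "\<not> (\<forall>x a. Pr P (\<lambda>\<omega>. Xv \<omega> = x \<and> Av \<omega> = a) > 0 \<longrightarrow>
             cPr P (\<lambda>\<omega>. \<not> Lv \<omega>) (\<lambda>\<omega>. Xv \<omega> = x \<and> Av \<omega> = a) > 0)"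
      using pxa_pos[OF \<omega>0(1)] \<omega>0(2) unfolding pxa_def q_def by force
    show ?thesis using inf s2 notprem by simp blast
  next
    case False
    have b_pos: "0 < b \<omega>" if "\<omega> \<in> ?S" for \<omega>
    proof -
      have "b \<omega> \<noteq> 0" using False that q_eq[OF that] by auto
      thus ?thesis using b_nonneg[of \<omega>] by simp
    qed
    have s1: "susp P (\<lambda>\<omega>. (Xv \<omega>, Av \<omega>)) = ereal (\<Sum>\<omega>\<in>?S. pmf P \<omega> * (- log 2 (q \<omega>)))"
    proof -
      have "susp P (\<lambda>\<omega>. (Xv \<omega>, Av \<omega>)) = (\<Sum>y\<in>(\<lambda>\<omega>. (Xv \<omega>, Av \<omega>)) ` ?S.
          ereal (Pr P (\<lambda>\<omega>. (Xv \<omega>, Av \<omega>) = y) *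
            (- log 2 (cPr P (\<lambda>w. \<not> Lv w) (\<lambda>w. (Xv w, Av w) = y)))))"
        unfolding susp_def
      proof (rule sum.cong[OF refl])
        fix y assume "y \<in> (\<lambda>\<omega>. (Xv \<omega>, Av \<omega>)) ` ?S"
        then obtain \<omega> where \<omega>: "\<omega> \<in> ?S" "y = (Xv \<omega>, Av \<omega>)" by auto
        have "cPr P (\<lambda>w. \<not> Lv w) (\<lambda>w. (Xv w, Av w) = y) \<noteq> 0"
          using False \<omega> unfolding q_def by auto
        thus "ereal (Pr P (\<lambda>\<omega>. (Xv \<omega>, Av \<omega>) = y)) * susp_at P (\<lambda>\<omega>. (Xv \<omega>, Av \<omega>)) y =
          ereal (Pr P (\<lambda>\<omega>. (Xv \<omega>, Av \<omega>) = y) *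
            (- log 2 (cPr P (\<lambda>w. \<not> Lv w) (\<lambda>w. (Xv w, Av w) = y))))"
          by (simp add: susp_at_def Let_def)
      qed
      also have "\<dots> = ereal (\<Sum>y\<in>(\<lambda>\<omega>. (Xv \<omega>, Av \<omega>)) ` ?S.
          Pr P (\<lambda>\<omega>. (Xv \<omega>, Av \<omega>) = y) *
            (- log 2 (cPr P (\<lambda>w. \<not> Lv w) (\<lambda>w. (Xv w, Av w) = y))))"
        by (rule sum_ereal)
      also have "\<dots> = ereal (\<Sum>\<omega>\<in>?S. pmf P \<omega> * (- log 2 (q \<omega>)))"
        using group_sum1[OF fin, of "\<lambda>\<omega>. (Xv \<omega>, Av \<omega>)" "\<lambda>y. - log 2 (cPr P (\<lambda>w. \<not> Lv w) (\<lambda>w. (Xv w, Av w) = y))"]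
        unfolding q_def by simp
      finally show ?thesis .
    qed
    define D where "D = (\<Sum>\<omega>\<in>?S. pmf P \<omega> * log 2 (pa \<omega> / b \<omega>))"
    define s1r where "s1r = (\<Sum>\<omega>\<in>?S. pmf P \<omega> * (- log 2 (q \<omega>)))"
    define s2r where "s2r = (\<Sum>\<omega>\<in>?S. pmf P \<omega> * (- log 2 (r \<omega>)))"
    define Ir where "Ir = (\<Sum>\<omega>\<in>?S. pmf P \<omega> * log 2 (pxa \<omega> / (px \<omega> * pa \<omega>)))"
    have key: "s1r - s2r - Ir = D"
    proof -
      have "s1r - s2r - Ir = (\<Sum>\<omega>\<in>?S. pmf P \<omega> * (- log 2 (q \<omega>)) - pmf P \<omega> * (- log 2 (r \<omega>))
             - pmf P \<omega> * log 2 (pxa \<omega> / (px \<omega> * pa \<omega>)))"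
        unfolding s1r_def s2r_def Ir_def by (simp only: sum_subtractf)
      also have "\<dots> = D" unfolding D_def
      proof (rule sum.cong[OF refl])
        fix \<omega> assume \<omega>: "\<omega> \<in> ?S"
        have eq: "- log 2 (q \<omega>) + log 2 (r \<omega>) - log 2 (pxa \<omega> / (px \<omega> * pa \<omega>)) = log 2 (pa \<omega> / b \<omega>)"
          using log_ident[OF b_pos[OF \<omega>] jX_pos[OF \<omega>] pxa_pos[OF \<omega>] px_pos[OF \<omega>] pa_pos[OF \<omega>]]
          by (simp add: q_eq[OF \<omega>] r_eq)
        show "pmf P \<omega> * (- log 2 (q \<omega>)) - pmf P \<omega> * (- log 2 (r \<omega>))
             - pmf P \<omega> * log 2 (pxa \<omega> / (px \<omega> * pa \<omega>)) = pmf P \<omega> * log 2 (pa \<omega> / b \<omega>)"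
          unfolding eq[symmetric] by (simp add: algebra_simps)
      qed
      finally show ?thesis .
    qed
    have sum_p: "(\<Sum>\<omega>\<in>?S. pmf P \<omega>) = 1" using sum_pmf_eq_1[OF fin] by simp
    have sum_h: "(\<Sum>\<omega>\<in>?S. pmf P \<omega> * (1 - b \<omega> / pa \<omega>) / ln 2) = 0"
    proof -
      have "(\<Sum>\<omega>\<in>?S. pmf P \<omega> * (1 - b \<omega> / pa \<omega>) / ln 2)
          = (\<Sum>\<omega>\<in>?S. pmf P \<omega> - pmf P \<omega> * (b \<omega> / pa \<omega>)) / ln 2"
        by (simp add: sum_divide_distrib right_diff_distrib)
      also have "\<dots> = (1 - 1) / ln 2" by (simp only: sum_subtractf sum_p sum_b)
      finally show ?thesis by simp
    qed
    define g :: "bool \<times> 'x \<times> 'a \<Rightarrow> real" where "g \<omega> = pmf P \<omega> * log 2 (pa \<omega> / b \<omega>) - pmf P \<omega> * (1 - b \<omega> / pa \<omega>) / ln 2" for \<omega>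
    have gD: "D = (\<Sum>\<omega>\<in>?S. g \<omega>)"
      unfolding D_def g_def by (simp only: sum_subtractf sum_h diff_zero)
    have g_nonneg: "0 \<le> g \<omega>" if "\<omega> \<in> ?S" for \<omega>
      unfolding g_def by (rule gibbs_pt(1)[OF pos[OF that] pa_pos[OF that] b_pos[OF that]])
    have D_nonneg: "0 \<le> D" unfolding gD by (rule sum_nonneg) (rule g_nonneg)
    have D0: "D = 0 \<longleftrightarrow> (\<forall>\<omega>\<in>?S. pa \<omega> = b \<omega>)"
    proof
      assume "D = 0"
      hence "\<forall>\<omega>\<in>?S. g \<omega> = 0" unfolding gD using sum_nonneg_eq_0_iff[OF fin, of g] g_nonneg by blast
      thus "\<forall>\<omega>\<in>?S. pa \<omega> = b \<omega>"
        using gibbs_pt(2)[OF pos pa_pos b_pos] unfolding g_def by (metis)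
    next
      assume H: "\<forall>\<omega>\<in>?S. pa \<omega> = b \<omega>"
      show "D = 0" unfolding D_def
      proof (rule sum.neutral, rule ballI)
        fix \<omega> assume \<omega>: "\<omega> \<in> ?S"
        show "pmf P \<omega> * log 2 (pa \<omega> / b \<omega>) = 0" using H \<omega> pa_pos[OF \<omega>] by simp
      qed
    qed
    have MI': "mutual_info P Xv Av = s1r - s2r - D" using MI key unfolding Ir_def by simp
    show ?thesis
      unfolding s1 s2 s1r_def[symmetric] s2r_def[symmetric]
      using MI' D_nonneg D0 allA by simp
  qed
qed

end
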